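(* With respect to the lexicographical product, $I_{even}\times\omega\cong I_{odd}$, $I_{odd}\times\omega\cong I_{even}$, and $I\times\omega\cong I$. Consequently $I_{even}\times\omega^2\cong I_{even}$ and $I_{odd}\times\omega^2\cong I_{odd}$.
   Context: For linear orders $X,Y$, $X\times Y$ is the lexicographical product (each point of $X$ replaced by a copy of $Y$). Ordinal exponents have their usual ordinal meaning, with $\omega^\omega=\sup_{n<\omega}\omega^n$; $kZ$ denotes $k$ consecutive copies of the order $Z$. The $\omega^*$-sum $\cdots+M_2+M_1$ has $M_{k+1}$ entirely to the left of $M_k$. For $n\ge 0$ let $L_n=\cdots+3\omega^{n+3}+2\omega^{n+2}+\omega^{n+1}+\omega^\omega$ (the $\omega^*$-sum whose $k$-th summand from the right, $k\ge1$, is $k\,\omega^{n+k}$, followed by $\omega^\omega$), and for $n\ge1$ let $L_{-n}=\cdots+(n+3)\omega^{3}+(n+2)\omega^{2}+(n+1)\omega+\omega^\omega$ (the $\omega^*$-sum whose $k$-th summand from the right is $(n+k)\omega^k$, followed by $\omega^\omega$). For orders $M_i$ ($i\in\mathbb{Z}$), $\cdots+M_{-1}+M_0+M_1+\cdots$ denotes the $\mathbb{Z}$-indexed ordered sum. Define \[ I_{even}=\cdots+L_{-2}+L_0+L_2+\cdots,\quad I_{odd}=\cdots+L_{-1}+L_1+L_3+\cdots,\quad I=\cdots+L_{-1}+L_0+L_1+\cdots, \] the $\mathbb{Z}$-sums of the $L_i$ over even $i$, odd $i$, and all $i$ respectively, in increasing order of index. *)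

theory Defs
  imports Main
begin

section \<open>Linear orders as (reflexive) relations, carrier = Field\<close>

definition order_iso :: "'a rel \<Rightarrow> 'b rel \<Rightarrow> bool" where
  "order_iso r s \<longleftrightarrow> (\<exists>f. bij_betw f (Field r) (Field s) \<and>
      (\<forall>a\<in>Field r. \<forall>b\<in>Field r. (a, b) \<in> r \<longleftrightarrow> (f a, f b) \<in> s))"

definition osum :: "'i rel \<Rightarrow> ('i \<Rightarrow> 'a rel) \<Rightarrow> ('i \<times> 'a) rel" where
  "osum J M = {((i, x), (j, y)). i \<in> Field J \<and> j \<in> Field J \<and>
      x \<in> Field (M i) \<and> y \<in> Field (M j) \<and>
      ((i \<noteq> j \<and> (i, j) \<in> J) \<or> (i = j \<and> (x, y) \<in> M i))}"

definition lexprod :: "'a rel \<Rightarrow> 'b rel \<Rightarrow> ('a \<times> 'b) rel" where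
  "lexprod X Y = {((a, b), (a', b')). a \<in> Field X \<and> a' \<in> Field X \<and>
      b \<in> Field Y \<and> b' \<in> Field Y \<and>
      ((a \<noteq> a' \<and> (a, a') \<in> X) \<or> (a = a' \<and> (b, b') \<in> Y))}"

definition omega_ord :: "nat rel" where
  "omega_ord = {(m, n). m \<le> n}"

definition fin_ord :: "nat \<Rightarrow> nat rel" where
  "fin_ord k = {(a, b). a \<le> b \<and> b < k}"

text \<open>Ordinal power \<omega>^n, realised on nat lists of length n:
  \<omega>^0 = 1, \<omega>^(n+1) = \<omega>^n \<cdot> \<omega> (= \<omega> copies of \<omega>^n).\<close>
fun omega_pow :: "nat \<Rightarrow> nat list rel" where
  "omega_pow 0 = {([], [])}"
| "omega_pow (Suc n) =
     (\<lambda>((a, xs), (b, ys)). (a # xs, b # ys)) ` lexprod omega_ord (omega_pow n)"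

text \<open>\<omega>^\<omega> = sup of the chain \<omega>^0 \<subseteq> \<omega>^1 \<subseteq> ..., where \<omega>^n is identified with an
  initial segment of \<omega>^(n+1) via xs \<mapsto> 0 # xs.  Representatives: lists without
  leading zero.\<close>
definition omega_omega :: "nat list rel" where
  "omega_omega = {(xs, ys). (xs = [] \<or> hd xs \<noteq> 0) \<and> (ys = [] \<or> hd ys \<noteq> 0) \<and>
      (length xs < length ys \<or>
       (length xs = length ys \<and> (xs, ys) \<in> omega_pow (length xs)))}"

text \<open>Summands indexed by i \<le> 0: index -k (k \<ge> 1) is the k-th summand
  from the right, index 0 is the final \<omega>^\<omega> (as 1 copy of \<omega>^\<omega>).
  m = n \<ge> 0: k-th summand k \<omega>^(n+k);  m = -n < 0: k-th summand (n+k) \<omega>^k.\<close>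
definition L_summand :: "int \<Rightarrow> int \<Rightarrow> (nat \<times> nat list) rel" where
  "L_summand m i =
     (if i = 0 then lexprod (fin_ord 1) omega_omega
      else let k = nat (- i) in
        (if m \<ge> 0 then lexprod (fin_ord k) (omega_pow (nat m + k))
         else lexprod (fin_ord (nat (- m) + k)) (omega_pow k)))"

definition L_ord :: "int \<Rightarrow> (int \<times> (nat \<times> nat list)) rel" where
  "L_ord m = osum {(i, j). i \<le> j \<and> j \<le> (0::int)} (L_summand m)"

definition int_ord :: "int rel" where
  "int_ord = {(i, j). i \<le> j}"

definition I_even :: "(int \<times> (int \<times> (nat \<times> nat list))) rel" where
  "I_even = osum int_ord (\<lambda>i. L_ord (2 * i))"

definition I_odd :: "(int \<times> (int \<times> (nat \<times> nat list))) rel" where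
  "I_odd = osum int_ord (\<lambda>i. L_ord (2 * i + 1))"

definition I_all :: "(int \<times> (int \<times> (nat \<times> nat list))) rel" where
  "I_all = osum int_ord L_ord"

end

theory Submission
  imports Defs
begin


definition rf :: "'a rel \<Rightarrow> bool" where "rf r \<longleftrightarrow> (\<forall>x\<in>Field r. (x,x) \<in> r)"

lemma order_isoI: "bij_betw f (Field r) (Field s) \<Longrightarrow>
  (\<And>a b. a\<in>Field r \<Longrightarrow> b\<in>Field r \<Longrightarrow> (a,b)\<in>r \<longleftrightarrow> (f a, f b)\<in>s) \<Longrightarrow> order_iso r s"
  unfolding order_iso_def by blast

lemma order_iso_refl: "order_iso r r"
  by (rule order_isoI[of id]) auto

lemma order_iso_trans: assumes "order_iso r s" "order_iso s t" shows "order_iso r t"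
proof -
  obtain f where f: "bij_betw f (Field r) (Field s)" "\<forall>a\<in>Field r. \<forall>b\<in>Field r. (a,b)\<in>r \<longleftrightarrow> (f a, f b)\<in>s"
    using assms(1) unfolding order_iso_def by blast
  obtain g where g: "bij_betw g (Field s) (Field t)" "\<forall>a\<in>Field s. \<forall>b\<in>Field s. (a,b)\<in>s \<longleftrightarrow> (g a, g b)\<in>t"
    using assms(2) unfolding order_iso_def by blast
  show ?thesis
  proof (rule order_isoI[of "g \<circ> f"])
    show "bij_betw (g \<circ> f) (Field r) (Field t)" using f g bij_betw_trans by blast
    fix a b assume "a \<in> Field r" "b \<in> Field r"
    moreover then have "f a \<in> Field s" "f b \<in> Field s" using f bij_betw_apply by metis+
    ultimately show "(a,b)\<in>r \<longleftrightarrow> ((g\<circ>f) a, (g\<circ>f) b)\<in>t" using f g by simp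
  qed
qed

lemma order_iso_sym: assumes "order_iso r s" shows "order_iso s r"
proof -
  obtain f where f: "bij_betw f (Field r) (Field s)" "\<forall>a\<in>Field r. \<forall>b\<in>Field r. (a,b)\<in>r \<longleftrightarrow> (f a, f b)\<in>s"
    using assms(1) unfolding order_iso_def by blast
  let ?g = "the_inv_into (Field r) f"
  show ?thesis
  proof (rule order_isoI[of ?g])
    show "bij_betw ?g (Field s) (Field r)" using f bij_betw_the_inv_into by blast
    fix a b assume ab: "a \<in> Field s" "b \<in> Field s"
    then have "?g a \<in> Field r" "?g b \<in> Field r" "f (?g a) = a" "f (?g b) = b"
      using f(1) by (auto intro: the_inv_into_into simp: bij_betw_def f_the_inv_into_f)
    then show "(a,b)\<in>s \<longleftrightarrow> (?g a, ?g b)\<in>r" using f(2) by metis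
  qed
qed

lemma lexprod_mem[simp]: "((a,b),(a',b')) \<in> lexprod X Y \<longleftrightarrow> a \<in> Field X \<and> a' \<in> Field X \<and> b\<in>Field Y \<and> b'\<in>Field Y \<and> ((a\<noteq>a' \<and> (a,a')\<in>X) \<or> (a=a' \<and> (b,b')\<in>Y))"
  by (simp add: lexprod_def)

lemma osum_mem[simp]: "((i,x),(j,y)) \<in> osum J M \<longleftrightarrow> i \<in> Field J \<and> j \<in> Field J \<and> x\<in>Field (M i) \<and> y\<in>Field (M j) \<and> ((i\<noteq>j \<and> (i,j)\<in>J) \<or> (i=j \<and> (x,y)\<in>M i))"
  by (simp add: osum_def)

lemma Field_lexprod: assumes "rf Y" shows "Field (lexprod X Y) = Field X \<times> Field Y"
proof
  show "Field (lexprod X Y) \<subseteq> Field X \<times> Field Y"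
    by (auto simp: Field_def lexprod_def)
  show "Field X \<times> Field Y \<subseteq> Field (lexprod X Y)"
  proof clarify
    fix a b assume "a \<in> Field X" "b \<in> Field Y"
    then have "((a,b),(a,b)) \<in> lexprod X Y" using assms by (simp add: rf_def)
    then show "(a,b) \<in> Field (lexprod X Y)" by (rule FieldI1)
  qed
qed

lemma rf_lexprod: "rf Y \<Longrightarrow> rf (lexprod X Y)"
  by (auto simp: rf_def Field_lexprod)

lemma Field_osum: assumes "\<forall>i\<in>Field J. rf (M i)" shows "Field (osum J M) = Sigma (Field J) (\<lambda>i. Field (M i))"
proof
  show "Field (osum J M) \<subseteq> Sigma (Field J) (\<lambda>i. Field (M i))"
    by (auto simp: Field_def osum_def)
  show "Sigma (Field J) (\<lambda>i. Field (M i)) \<subseteq> Field (osum J M)"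
  proof clarify
    fix a b assume "a \<in> Field J" "b \<in> Field (M a)"
    then have "((a,b),(a,b)) \<in> osum J M" using assms by (simp add: rf_def)
    then show "(a,b) \<in> Field (osum J M)" by (rule FieldI1)
  qed
qed

lemma rf_osum: "\<forall>i\<in>Field J. rf (M i) \<Longrightarrow> rf (osum J M)"
  by (auto simp: rf_def Field_osum)

lemma lexprod_cong_left: assumes "order_iso X X'" "rf Y" shows "order_iso (lexprod X Y) (lexprod X' Y)"
proof -
  obtain f where f: "bij_betw f (Field X) (Field X')" "\<forall>a\<in>Field X. \<forall>b\<in>Field X. (a,b)\<in>X \<longleftrightarrow> (f a, f b)\<in>X'"
    using assms(1) unfolding order_iso_def by blast
  show ?thesis
  proof (rule order_isoI[of "\<lambda>(a,b). (f a, b)"])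
    show "bij_betw (\<lambda>(a,b). (f a, b)) (Field (lexprod X Y)) (Field (lexprod X' Y))"
      unfolding Field_lexprod[OF assms(2)] using f(1) bij_betw_map_prod[OF f(1) bij_betw_id]
      by (simp add: map_prod_def id_def)
    fix p q assume "p \<in> Field (lexprod X Y)" "q \<in> Field (lexprod X Y)"
    then show "(p,q) \<in> lexprod X Y \<longleftrightarrow> ((\<lambda>(a,b). (f a, b)) p, (\<lambda>(a,b). (f a, b)) q) \<in> lexprod X' Y"
      using f unfolding Field_lexprod[OF assms(2)] bij_betw_def inj_on_def
      by (cases p; cases q) auto
  qed
qed

lemma lexprod_cong_right: assumes "order_iso Y Y'" "rf Y" "rf Y'" shows "order_iso (lexprod X Y) (lexprod X Y')"
proof -
  obtain f where f: "bij_betw f (Field Y) (Field Y')" "\<forall>a\<in>Field Y. \<forall>b\<in>Field Y. (a,b)\<in>Y \<longleftrightarrow> (f a, f b)\<in>Y'"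
    using assms(1) unfolding order_iso_def by blast
  show ?thesis
  proof (rule order_isoI[of "\<lambda>(a,b). (a, f b)"])
    show "bij_betw (\<lambda>(a,b). (a, f b)) (Field (lexprod X Y)) (Field (lexprod X Y'))"
      unfolding Field_lexprod[OF assms(2)] Field_lexprod[OF assms(3)] using bij_betw_map_prod[OF bij_betw_id f(1)]
      by (simp add: map_prod_def id_def)
    fix p q assume "p \<in> Field (lexprod X Y)" "q \<in> Field (lexprod X Y)"
    then show "(p,q) \<in> lexprod X Y \<longleftrightarrow> ((\<lambda>(a,b). (a, f b)) p, (\<lambda>(a,b). (a, f b)) q) \<in> lexprod X Y'"
      using f unfolding Field_lexprod[OF assms(2)] bij_betw_def inj_on_def
      by (cases p; cases q) auto
  qed
qed

lemma lexprod_assoc: assumes "rf Y" "rf Z" shows "order_iso (lexprod (lexprod X Y) Z) (lexprod X (lexprod Y Z))"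
proof (rule order_isoI[of "\<lambda>((a,b),c). (a,(b,c))"])
  have r: "rf (lexprod Y Z)" using assms rf_lexprod by blast
  show "bij_betw (\<lambda>((a,b),c). (a,(b,c))) (Field (lexprod (lexprod X Y) Z)) (Field (lexprod X (lexprod Y Z)))"
    unfolding Field_lexprod[OF assms(2)] Field_lexprod[OF assms(1)] Field_lexprod[OF r]
    by (rule bij_betw_byWitness[where f'="\<lambda>(a,(b,c)). ((a,b),c)"]) auto
  fix p q assume "p \<in> Field (lexprod (lexprod X Y) Z)" "q \<in> Field (lexprod (lexprod X Y) Z)"
  then show "(p,q) \<in> lexprod (lexprod X Y) Z \<longleftrightarrow> ((\<lambda>((a,b),c). (a,(b,c))) p, (\<lambda>((a,b),c). (a,(b,c))) q) \<in> lexprod X (lexprod Y Z)"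
    unfolding Field_lexprod[OF assms(2)] Field_lexprod[OF assms(1)] Field_lexprod[OF r]
    by (cases p; cases q) (auto simp: Field_lexprod[OF assms(2)] Field_lexprod[OF assms(1)] Field_lexprod[OF r])
qed

lemma lexprod_osum: assumes "rf Y" "\<forall>i\<in>Field J. rf (M i)"
  shows "order_iso (lexprod (osum J M) Y) (osum J (\<lambda>i. lexprod (M i) Y))"
proof (rule order_isoI[of "\<lambda>((i,x),y). (i,(x,y))"])
  have r: "\<forall>i\<in>Field J. rf (lexprod (M i) Y)" using assms rf_lexprod by blast
  show "bij_betw (\<lambda>((i,x),y). (i,(x,y))) (Field (lexprod (osum J M) Y)) (Field (osum J (\<lambda>i. lexprod (M i) Y)))"
    unfolding Field_lexprod[OF assms(1)] Field_osum[OF assms(2)] Field_osum[OF r]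
    by (rule bij_betw_byWitness[where f'="\<lambda>(i,(x,y)). ((i,x),y)"]) (auto simp: Field_lexprod[OF assms(1)])
  fix p q assume "p \<in> Field (lexprod (osum J M) Y)" "q \<in> Field (lexprod (osum J M) Y)"
  then show "(p,q) \<in> lexprod (osum J M) Y \<longleftrightarrow> ((\<lambda>((i,x),y). (i,(x,y))) p, (\<lambda>((i,x),y). (i,(x,y))) q) \<in> osum J (\<lambda>i. lexprod (M i) Y)"
    unfolding Field_lexprod[OF assms(1)] Field_osum[OF assms(2)]
    by (cases p; cases q) (auto simp: Field_lexprod[OF assms(1)] Field_osum[OF assms(2)])
qed




lemma osum_cong:
  assumes g: "bij_betw g (Field J) (Field J')"
    and gJ: "\<forall>i\<in>Field J. \<forall>j\<in>Field J. (i,j)\<in>J \<longleftrightarrow> (g i, g j)\<in>J'"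
    and iso: "\<forall>i\<in>Field J. order_iso (M i) (M' (g i))"
    and r1: "\<forall>i\<in>Field J. rf (M i)" and r2: "\<forall>i\<in>Field J'. rf (M' i)"
  shows "order_iso (osum J M) (osum J' M')"
proof -
  have "\<forall>i\<in>Field J. \<exists>f. bij_betw f (Field (M i)) (Field (M' (g i))) \<and>
      (\<forall>a\<in>Field (M i). \<forall>b\<in>Field (M i). (a,b)\<in>M i \<longleftrightarrow> (f a, f b)\<in>M' (g i))"
    using iso unfolding order_iso_def by blast
  then obtain F where F: "\<And>i. i\<in>Field J \<Longrightarrow> bij_betw (F i) (Field (M i)) (Field (M' (g i))) \<and>
      (\<forall>a\<in>Field (M i). \<forall>b\<in>Field (M i). (a,b)\<in>M i \<longleftrightarrow> (F i a, F i b)\<in>M' (g i))"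
    by metis
  have ginj: "inj_on g (Field J)" using g bij_betw_def by blast
  show ?thesis
  proof (rule order_isoI[of "\<lambda>(i,x). (g i, F i x)"])
    show "bij_betw (\<lambda>(i,x). (g i, F i x)) (Field (osum J M)) (Field (osum J' M'))"
      unfolding Field_osum[OF r1] Field_osum[OF r2] bij_betw_def
    proof
      show "inj_on (\<lambda>(i, x). (g i, F i x)) (SIGMA i:Field J. Field (M i))"
      proof (rule inj_onI, clarify)
        fix i x j y assume "i \<in> Field J" "x \<in> Field (M i)" "j \<in> Field J" "y \<in> Field (M j)"
          "g i = g j" "F i x = F j y"
        then show "i = j \<and> x = y" using ginj F unfolding inj_on_def bij_betw_def by metis
      qed
      show "(\<lambda>(i, x). (g i, F i x)) ` (SIGMA i:Field J. Field (M i)) = (SIGMA i:Field J'. Field (M' i))"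
      proof safe
        fix i x assume "i \<in> Field J" "x \<in> Field (M i)"
        then show "g i \<in> Field J'" "F i x \<in> Field (M' (g i))" using g F bij_betw_apply by metis+
      next
        fix j y assume j: "j \<in> Field J'" "y \<in> Field (M' j)"
        then obtain i where i: "i \<in> Field J" "j = g i" using g by (metis bij_betw_iff_bijections)
        then obtain x where "x \<in> Field (M i)" "y = F i x" using F[OF i(1)] j unfolding bij_betw_def by blast
        then show "(j,y) \<in> (\<lambda>(i, x). (g i, F i x)) ` (SIGMA i:Field J. Field (M i))" using i by force
      qed
    qed
    fix p q assume "p \<in> Field (osum J M)" "q \<in> Field (osum J M)"
    then obtain i x j y where pq: "p = (i,x)" "q = (j,y)" "i \<in> Field J" "x \<in> Field (M i)" "j \<in> Field J" "y \<in> Field (M j)"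
      unfolding Field_osum[OF r1] by blast
    have a: "g i \<in> Field J'" "g j \<in> Field J'" "F i x \<in> Field (M' (g i))" "F j y \<in> Field (M' (g j))"
      using pq g F bij_betw_apply by metis+
    have b: "g i = g j \<longleftrightarrow> i = j" using ginj pq unfolding inj_on_def by blast
    show "(p,q) \<in> osum J M \<longleftrightarrow> ((\<lambda>(i,x). (g i, F i x)) p, (\<lambda>(i,x). (g i, F i x)) q) \<in> osum J' M'"
      using pq a b gJ F[OF pq(3)] by auto
  qed
qed

definition Nord :: "int rel" where "Nord = {(i, j). i \<le> j \<and> j \<le> (0::int)}"
definition bool_ord :: "bool rel" where "bool_ord = {(a, b). a \<le> b}"

lemma Field_Nord: "Field Nord = {i. i \<le> 0}"
  by (auto simp: Field_def Nord_def)
lemma mem_Nord[simp]: "(i,j) \<in> Nord \<longleftrightarrow> i \<le> j \<and> j \<le> 0"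
  by (simp add: Nord_def)
lemma mem_bool[simp]: "(a,b) \<in> bool_ord \<longleftrightarrow> a \<le> b"
  by (simp add: bool_ord_def)
lemma Field_bool: "Field bool_ord = UNIV"
  by (auto simp: Field_def bool_ord_def)

lemma merge:
  assumes iso1: "\<forall>i<0. order_iso (S i) (T (i-1))"
    and iso0: "order_iso (S 0) (osum bool_ord (\<lambda>b. if b then T 0 else T (-1)))"
    and rS: "\<forall>i\<le>0. rf (S i)" and rT: "\<forall>i\<le>0. rf (T i)"
  shows "order_iso (osum Nord S) (osum Nord T)"
proof -
  have "\<forall>i\<in>{i. i<0}. \<exists>f. bij_betw f (Field (S i)) (Field (T (i-1))) \<and>
      (\<forall>a\<in>Field (S i). \<forall>b\<in>Field (S i). (a,b)\<in>S i \<longleftrightarrow> (f a, f b)\<in>T (i-1))"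
    using iso1 unfolding order_iso_def by blast
  then obtain F where F: "\<And>i. i < 0 \<Longrightarrow> bij_betw (F i) (Field (S i)) (Field (T (i-1))) \<and>
      (\<forall>a\<in>Field (S i). \<forall>b\<in>Field (S i). (a,b)\<in>S i \<longleftrightarrow> (F i a, F i b)\<in>T (i-1))"
    by (metis mem_Collect_eq)
  let ?B = "osum bool_ord (\<lambda>b. if b then T 0 else T (-1))"
  obtain G where G: "bij_betw G (Field (S 0)) (Field ?B)"
      "\<forall>a\<in>Field (S 0). \<forall>b\<in>Field (S 0). (a,b)\<in>S 0 \<longleftrightarrow> (G a, G b)\<in>?B"
    using iso0 unfolding order_iso_def by blast
  have rB: "\<forall>i\<in>Field bool_ord. rf (if i then T 0 else T (-1))" using rT by simp
  have FB: "Field ?B = {(b,y). y \<in> Field (if b then T 0 else T (-1))}"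
    unfolding Field_osum[OF rB] Field_bool by auto
  have rS': "\<forall>i\<in>Field Nord. rf (S i)" and rT': "\<forall>i\<in>Field Nord. rf (T i)"
    using rS rT by (auto simp: Field_Nord)
  define h where "h = (\<lambda>(i,x). if i < 0 then (i-1, F i x) else (if fst (G x) then 0 else -1, snd (G x)))"
  have FS: "Field (osum Nord S) = {(i,x). i \<le> 0 \<and> x \<in> Field (S i)}"
    unfolding Field_osum[OF rS'] Field_Nord by auto
  have FT: "Field (osum Nord T) = {(i,x). i \<le> 0 \<and> x \<in> Field (T i)}"
    unfolding Field_osum[OF rT'] Field_Nord by auto
  have Gin: "\<And>x. x \<in> Field (S 0) \<Longrightarrow> snd (G x) \<in> Field (if fst (G x) then T 0 else T (-1))"
    using G(1) FB bij_betw_apply by fastforce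
  have Ginj: "inj_on G (Field (S 0))" using G(1) bij_betw_def by blast
  have Finj: "\<And>i. i < 0 \<Longrightarrow> inj_on (F i) (Field (S i))" using F bij_betw_def by blast
  show ?thesis
  proof (rule order_isoI[of h])
    show "bij_betw h (Field (osum Nord S)) (Field (osum Nord T))"
      unfolding bij_betw_def
    proof
      show "inj_on h (Field (osum Nord S))"
      proof (rule inj_onI, unfold FS, clarify)
        fix i x j y assume A: "i \<le> 0" "x \<in> Field (S i)" "j \<le> 0" "y \<in> Field (S j)" "h (i,x) = h (j,y)"
        show "i = j \<and> x = y"
        proof (cases "i < 0"; cases "j < 0")
          assume "i < 0" "j < 0" then show ?thesis using A Finj unfolding h_def inj_on_def by auto
        next
          assume "i < 0" "\<not> j < 0" then show ?thesis using A unfolding h_def by (auto split: if_splits)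
        next
          assume "\<not> i < 0" "j < 0" then show ?thesis using A unfolding h_def by (auto split: if_splits)
        next
          assume ij: "\<not> i < 0" "\<not> j < 0"
          then have "i = 0" "j = 0" using A by auto
          moreover have "G x = G y" using A ij \<open>i = 0\<close> \<open>j = 0\<close> unfolding h_def
            by (simp add: prod_eq_iff split: if_splits)
          ultimately show ?thesis using Ginj A unfolding inj_on_def by auto
        qed
      qed
      show "h ` Field (osum Nord S) = Field (osum Nord T)"
      proof
        show "h ` Field (osum Nord S) \<subseteq> Field (osum Nord T)"
          unfolding FS FT h_def using F Gin bij_betw_apply
          by (force split: if_splits)
        show "Field (osum Nord T) \<subseteq> h ` Field (osum Nord S)"
        proof (unfold FT, clarify)
          fix j y assume j: "j \<le> 0" "y \<in> Field (T j)"
          show "(j,y) \<in> h ` Field (osum Nord S)"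
          proof (cases "j < -1")
            case True
            then have "j + 1 < 0" by simp
            then obtain x where "x \<in> Field (S (j+1))" "y = F (j+1) x"
              using F[of "j+1"] j unfolding bij_betw_def by force
            then show ?thesis unfolding FS h_def using True by (auto intro!: image_eqI[of _ _ "(j+1,x)"])
          next
            case False
            let ?b = "j = 0"
            have "j = 0 \<or> j = -1" using False j by auto
            then have "(?b, y) \<in> Field ?B" unfolding FB using j by auto
            then obtain x where x: "x \<in> Field (S 0)" "G x = (?b, y)" using G(1) unfolding bij_betw_def by force
            have "h (0,x) = (j,y)" unfolding h_def using x \<open>j = 0 \<or> j = -1\<close> by auto
            then show ?thesis unfolding FS using x by force
          qed
        qed
      qed
    qed
    fix p q assume "p \<in> Field (osum Nord S)" "q \<in> Field (osum Nord S)"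
    then obtain i x j y where pq: "p = (i,x)" "q = (j,y)" "i \<le> 0" "x \<in> Field (S i)" "j \<le> 0" "y \<in> Field (S j)"
      unfolding FS by blast
    show "(p,q) \<in> osum Nord S \<longleftrightarrow> (h p, h q) \<in> osum Nord T"
    proof (cases "i < 0"; cases "j < 0")
      assume ij: "i < 0" "j < 0"
      have "F i x \<in> Field (T (i-1))" "F j y \<in> Field (T (j-1))" using F ij pq bij_betw_apply by metis+
      then show ?thesis using ij pq F[of i] unfolding h_def by (auto simp: Field_Nord)
    next
      assume ij: "i < 0" "\<not> j < 0"
      have "F i x \<in> Field (T (i-1))" using F ij pq bij_betw_apply by metis
      then show ?thesis using ij pq Gin[of y] unfolding h_def by (auto simp: Field_Nord)
    next
      assume ij: "\<not> i < 0" "j < 0"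
      have "F j y \<in> Field (T (j-1))" using F ij pq bij_betw_apply by metis
      then show ?thesis using ij pq Gin[of x] unfolding h_def by (auto simp: Field_Nord)
    next
      assume ij: "\<not> i < 0" "\<not> j < 0"
      then have z: "i = 0" "j = 0" using pq by auto
      obtain b u where bu: "G x = (b,u)" by force
      obtain c v where cv: "G y = (c,v)" by force
      have uv: "u \<in> Field (if b then T 0 else T (-1))" "v \<in> Field (if c then T 0 else T (-1))"
        using Gin[of x] Gin[of y] pq z bu cv by auto
      have "(x,y) \<in> S 0 \<longleftrightarrow> ((b,u),(c,v)) \<in> ?B" using G(2) pq z bu cv by metis
      also have "\<dots> \<longleftrightarrow> ((if b then 0 else -1, u), (if c then 0 else -1, v)) \<in> osum Nord T"
        using uv by (auto simp: Field_bool Field_Nord)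
      finally show ?thesis using pq z bu cv unfolding h_def by (auto simp: Field_Nord)
    qed
  qed
qed




fun lexle :: "nat list \<Rightarrow> nat list \<Rightarrow> bool" where
  "lexle [] [] = True"
| "lexle (a#xs) (b#ys) = (a < b \<or> (a = b \<and> lexle xs ys))"
| "lexle _ _ = False"

lemma lexle_refl[simp]: "lexle xs xs" by (induction xs) auto

lemma lexle_append: "length xs = length ys \<Longrightarrow>
  lexle (xs@[a]) (ys@[b]) \<longleftrightarrow> (lexle xs ys \<and> xs \<noteq> ys) \<or> (xs = ys \<and> a \<le> b)"
proof (induction xs arbitrary: ys)
  case Nil then show ?case by auto
next
  case (Cons x xs) then show ?case by (cases ys) auto
qed

lemma omega_ord_mem[simp]: "(a,b) \<in> omega_ord \<longleftrightarrow> a \<le> b" by (simp add: omega_ord_def)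
lemma Field_omega_ord[simp]: "Field omega_ord = UNIV" by (auto simp: Field_def omega_ord_def)
lemma rf_omega_ord[simp]: "rf omega_ord" by (simp add: rf_def)

lemma fin_ord_mem[simp]: "(a,b) \<in> fin_ord k \<longleftrightarrow> a \<le> b \<and> b < k" by (simp add: fin_ord_def)
lemma Field_fin_ord[simp]: "Field (fin_ord k) = {..<k}"
proof
  show "Field (fin_ord k) \<subseteq> {..<k}" by (auto simp: Field_def fin_ord_def)
  show "{..<k} \<subseteq> Field (fin_ord k)"
  proof
    fix a assume "a \<in> {..<k}" then have "(a,a) \<in> fin_ord k" by simp
    then show "a \<in> Field (fin_ord k)" by (rule FieldI1)
  qed
qed
lemma rf_fin_ord[simp]: "rf (fin_ord k)" by (simp add: rf_def)

lemma omega_pow_Suc_cons: "(a#xs, b#ys) \<in> omega_pow (Suc n) \<longleftrightarrow> ((a,xs),(b,ys)) \<in> lexprod omega_ord (omega_pow n)"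
proof
  assume "((a,xs),(b,ys)) \<in> lexprod omega_ord (omega_pow n)"
  then show "(a#xs, b#ys) \<in> omega_pow (Suc n)" unfolding omega_pow.simps by (rule rev_image_eqI) simp
next
  assume "(a#xs, b#ys) \<in> omega_pow (Suc n)"
  then obtain p where p: "p \<in> lexprod omega_ord (omega_pow n)"
    "(a#xs, b#ys) = (\<lambda>((a, xs), (b, ys)). (a # xs, b # ys)) p"
    unfolding omega_pow.simps by blast
  obtain a' xs' b' ys' where "p = ((a',xs'),(b',ys'))" by (metis prod.exhaust)
  then show "((a,xs),(b,ys)) \<in> lexprod omega_ord (omega_pow n)" using p by simp
qed
lemma omega_pow_Suc_nil1: "([], ys) \<notin> omega_pow (Suc n)" by auto
lemma omega_pow_Suc_nil2: "(xs, []) \<notin> omega_pow (Suc n)" by auto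

lemma omega_pow_mem[simp]: "(xs,ys) \<in> omega_pow n \<longleftrightarrow> length xs = n \<and> length ys = n \<and> lexle xs ys"
proof (induction n arbitrary: xs ys)
  case 0 then show ?case by auto
next
  case (Suc n)
  have F: "Field (omega_pow n) = {xs. length xs = n}"
  proof
    show "Field (omega_pow n) \<subseteq> {xs. length xs = n}" using Suc.IH by (auto simp: Field_def)
    show "{xs. length xs = n} \<subseteq> Field (omega_pow n)"
    proof
      fix xs :: "nat list" assume "xs \<in> {xs. length xs = n}" then have "(xs,xs) \<in> omega_pow n" using Suc.IH by simp
      then show "xs \<in> Field (omega_pow n)" by (rule FieldI1)
    qed
  qed
  show ?case
  proof (cases xs)
    case Nil then show ?thesis by (auto simp: omega_pow_Suc_nil1 simp del: omega_pow.simps)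
  next
    case C1: (Cons a xs')
    show ?thesis
    proof (cases ys)
      case Nil then show ?thesis using C1 by (auto simp: omega_pow_Suc_nil2 simp del: omega_pow.simps)
    next
      case (Cons b ys')
      then show ?thesis using C1 omega_pow_Suc_cons[of a xs' b ys' n] F Suc.IH by (auto simp del: omega_pow.simps)
    qed
  qed
qed

lemma Field_omega_pow[simp]: "Field (omega_pow n) = {xs. length xs = n}"
proof
  show "Field (omega_pow n) \<subseteq> {xs. length xs = n}" by (auto simp: Field_def)
  show "{xs. length xs = n} \<subseteq> Field (omega_pow n)"
  proof
    fix xs :: "nat list" assume "xs \<in> {xs. length xs = n}" then have "(xs,xs) \<in> omega_pow n" by simp
    then show "xs \<in> Field (omega_pow n)" by (rule FieldI1)
  qed
qed
declare omega_pow.simps(2)[simp del]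
lemma rf_omega_pow[simp]: "rf (omega_pow n)" by (simp add: rf_def)

definition okl :: "nat list \<Rightarrow> bool" where "okl xs \<longleftrightarrow> xs = [] \<or> hd xs \<noteq> 0"

lemma oo_mem[simp]: "(xs,ys) \<in> omega_omega \<longleftrightarrow> okl xs \<and> okl ys \<and>
   (length xs < length ys \<or> (length xs = length ys \<and> lexle xs ys))"
  by (auto simp: omega_omega_def okl_def)
lemma Field_oo[simp]: "Field omega_omega = {xs. okl xs}"
proof
  show "Field omega_omega \<subseteq> {xs. okl xs}" by (auto simp: Field_def)
  show "{xs. okl xs} \<subseteq> Field omega_omega"
  proof
    fix xs assume "xs \<in> {xs. okl xs}" then have "(xs,xs) \<in> omega_omega" by simp
    then show "xs \<in> Field omega_omega" by (rule FieldI1)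
  qed
qed
lemma rf_oo[simp]: "rf omega_omega" by (simp add: rf_def)

lemma omega_pow_snoc: "order_iso (lexprod (omega_pow p) omega_ord) (omega_pow (Suc p))"
proof (rule order_isoI[of "\<lambda>(xs,n). xs@[n]"])
  show "bij_betw (\<lambda>(xs,n). xs@[n]) (Field (lexprod (omega_pow p) omega_ord)) (Field (omega_pow (Suc p)))"
    unfolding Field_lexprod[OF rf_omega_ord]
  proof (rule bij_betw_byWitness[where f'="\<lambda>ys. (butlast ys, last ys)"])
    show "\<forall>a'\<in>Field (omega_pow (Suc p)). (case (butlast a', last a') of (xs, n) \<Rightarrow> xs @ [n]) = a'"
      by auto (metis append_butlast_last_id list.size(3) nat.simps(3))
  qed auto
  fix u v assume "u \<in> Field (lexprod (omega_pow p) omega_ord)" "v \<in> Field (lexprod (omega_pow p) omega_ord)"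
  then show "(u,v) \<in> lexprod (omega_pow p) omega_ord \<longleftrightarrow> ((\<lambda>(xs,n). xs@[n]) u, (\<lambda>(xs,n). xs@[n]) v) \<in> omega_pow (Suc p)"
    unfolding Field_lexprod[OF rf_omega_ord] by (cases u; cases v) (auto simp: lexle_append)
qed

lemma omega_pow_one: "order_iso omega_ord (omega_pow 1)"
proof (rule order_isoI[of "\<lambda>n. [n]"])
  show "bij_betw (\<lambda>n. [n]) (Field omega_ord) (Field (omega_pow 1))"
    by (rule bij_betw_byWitness[where f'=hd]) (auto simp: length_Suc_conv)
qed auto

lemma lexprod_one: assumes "rf X" shows "order_iso (lexprod (fin_ord 1) X) X"
proof (rule order_isoI[of snd])
  show "bij_betw snd (Field (lexprod (fin_ord 1) X)) (Field X)"
    unfolding Field_lexprod[OF assms] by (rule bij_betw_byWitness[where f'="\<lambda>x. (0,x)"]) auto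
  fix u v assume "u \<in> Field (lexprod (fin_ord 1) X)" "v \<in> Field (lexprod (fin_ord 1) X)"
  then show "(u,v) \<in> lexprod (fin_ord 1) X \<longleftrightarrow> (snd u, snd v) \<in> X"
    unfolding Field_lexprod[OF assms] by (cases u; cases v) auto
qed

definition phi :: "nat list \<times> nat \<Rightarrow> nat list" where
  "phi = (\<lambda>(xs,c). if xs = [] then (if c = 0 then [] else [c]) else xs@[c])"
definition psi :: "nat list \<Rightarrow> nat list \<times> nat" where
  "psi zs = (if length zs \<le> 1 then ([], if zs = [] then 0 else hd zs) else (butlast zs, last zs))"

lemma oo_times_omega: "order_iso (lexprod omega_omega omega_ord) omega_omega"
proof (rule order_isoI[of phi])
  show "bij_betw phi (Field (lexprod omega_omega omega_ord)) (Field omega_omega)"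
    unfolding Field_lexprod[OF rf_omega_ord]
  proof (rule bij_betw_byWitness[where f'=psi])
    show "\<forall>a\<in>Field omega_omega \<times> Field omega_ord. psi (phi a) = a"
      by (auto simp: phi_def psi_def okl_def)
    show "\<forall>a'\<in>Field omega_omega. phi (psi a') = a'"
    proof
      fix zs assume "zs \<in> Field omega_omega"
      then have "okl zs" by simp
      show "phi (psi zs) = zs"
      proof (cases "length zs \<le> 1")
        case True then show ?thesis using \<open>okl zs\<close>
          by (cases zs) (auto simp: phi_def psi_def okl_def)
      next
        case False
        then have "butlast zs \<noteq> []" "zs \<noteq> []" by (cases zs rule: rev_cases; auto)+
        then show ?thesis using False append_butlast_last_id[of zs] by (auto simp: phi_def psi_def)
      qed
    qed
    show "phi ` (Field omega_omega \<times> Field omega_ord) \<subseteq> Field omega_omega"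
      by (auto simp: phi_def okl_def split: if_splits)
    show "psi ` Field omega_omega \<subseteq> Field omega_omega \<times> Field omega_ord"
    proof
      fix p assume "p \<in> psi ` Field omega_omega"
      then obtain zs where "okl zs" "p = psi zs" by auto
      then show "p \<in> Field omega_omega \<times> Field omega_ord"
        by (cases zs rule: rev_cases) (auto simp: psi_def okl_def)
    qed
  qed
  fix u v assume "u \<in> Field (lexprod omega_omega omega_ord)" "v \<in> Field (lexprod omega_omega omega_ord)"
  then obtain xs c ys d where uv: "u = (xs,c)" "v = (ys,d)" "okl xs" "okl ys"
    unfolding Field_lexprod[OF rf_omega_ord] by auto
  show "(u,v) \<in> lexprod omega_omega omega_ord \<longleftrightarrow> (phi u, phi v) \<in> omega_omega"
  proof (cases "xs = []"; cases "ys = []")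
    assume "xs \<noteq> []" "ys \<noteq> []"
    then show ?thesis using uv by (auto simp: phi_def okl_def lexle_append)
  qed (use uv in \<open>auto simp: phi_def okl_def\<close>)
qed




fun chi :: "nat \<Rightarrow> nat list \<Rightarrow> bool \<times> (nat \<times> nat list)" where
  "chi n [] = (False,(0,[0]))"
| "chi n [k] = (False,(0,[k]))"
| "chi n [a,b] = (if a < n then (False,(a,[b])) else if a = n then (True,(0, if b = 0 then [] else [b])) else (True,(0,[a-n,b])))"
| "chi n (a#b#c#zs) = (True,(0,a#b#c#zs))"

fun chinv :: "nat \<Rightarrow> bool \<times> (nat \<times> nat list) \<Rightarrow> nat list" where
  "chinv n (False,(a,zs)) = (if a = 0 then (if hd zs = 0 then [] else [hd zs]) else [a, hd zs])"
| "chinv n (True,(a,zs)) = (case zs of [] \<Rightarrow> [n,0] | [b] \<Rightarrow> [n,b] | [a,b] \<Rightarrow> [a+n,b] | _ \<Rightarrow> zs)"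

lemma Field_bsum: "Field (osum bool_ord (\<lambda>b. if b then lexprod (fin_ord 1) omega_omega else lexprod (fin_ord n) (omega_pow 1)))
  = {(b,(a,zs)). if b then a = 0 \<and> okl zs else a < n \<and> length zs = 1}"
proof -
  have r: "\<forall>i\<in>Field bool_ord. rf (if i then lexprod (fin_ord 1) omega_omega else lexprod (fin_ord n) (omega_pow 1))"
    by (simp add: rf_lexprod)
  show ?thesis unfolding Field_osum[OF r] by (auto simp: Field_bool Field_lexprod rf_lexprod split: if_splits)
qed

lemma oo_split: assumes n: "n \<ge> 1"
  shows "order_iso omega_omega (osum bool_ord (\<lambda>b. if b then lexprod (fin_ord 1) omega_omega else lexprod (fin_ord n) (omega_pow 1)))"
proof (rule order_isoI[of "chi n"])
  show "bij_betw (chi n) (Field omega_omega) (Field (osum bool_ord (\<lambda>b. if b then lexprod (fin_ord 1) omega_omega else lexprod (fin_ord n) (omega_pow 1))))"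
    unfolding Field_bsum
  proof (rule bij_betw_byWitness[where f'="chinv n"])
    show "\<forall>a\<in>Field omega_omega. chinv n (chi n a) = a"
    proof
      fix u assume "u \<in> Field omega_omega" then have "okl u" by simp
      then show "chinv n (chi n u) = u" by (cases "(n,u)" rule: chi.cases) (auto simp: okl_def)
    qed
    show "\<forall>a'\<in>{(b,(a,zs)). if b then a = 0 \<and> okl zs else a < n \<and> length zs = 1}. chi n (chinv n a') = a'"
    proof
      fix w assume "w \<in> {(b,(a,zs)). if b then a = 0 \<and> okl zs else a < n \<and> length zs = 1}"
      then obtain b a zs where w: "w = (b,(a,zs))" and A: "if b then a = 0 \<and> okl zs else a < n \<and> length zs = 1"
        by auto
      have "chi n (chinv n (b,(a,zs))) = (b,(a,zs))"
      proof (cases b)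
        case True then show ?thesis using A by (cases "(n,zs)" rule: chi.cases) (auto simp: okl_def)
      next
        case False then show ?thesis using A by (cases "(n,zs)" rule: chi.cases) auto
      qed
      then show "chi n (chinv n w) = w" using w by simp
    qed
    show "chi n ` Field omega_omega \<subseteq> {(b,(a,zs)). if b then a = 0 \<and> okl zs else a < n \<and> length zs = 1}"
    proof
      fix w assume "w \<in> chi n ` Field omega_omega"
      then obtain u where u: "okl u" "w = chi n u" by auto
      then show "w \<in> {(b,(a,zs)). if b then a = 0 \<and> okl zs else a < n \<and> length zs = 1}"
        using n by (cases "(n,u)" rule: chi.cases) (auto simp: okl_def)
    qed
    show "chinv n ` {(b,(a,zs)). if b then a = 0 \<and> okl zs else a < n \<and> length zs = 1} \<subseteq> Field omega_omega"
    proof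
      fix w assume "w \<in> chinv n ` {(b,(a,zs)). if b then a = 0 \<and> okl zs else a < n \<and> length zs = 1}"
      then obtain b a zs where w: "w = chinv n (b,(a,zs))" and A: "if b then a = 0 \<and> okl zs else a < n \<and> length zs = 1"
        by auto
      have "chinv n (b,(a,zs)) \<in> Field omega_omega"
      proof (cases b)
        case True then show ?thesis using A n by (cases "(n,zs)" rule: chi.cases) (auto simp: okl_def)
      next
        case False
        then obtain k where "zs = [k]" using A by (cases zs) auto
        then show ?thesis using A False by (auto simp: okl_def)
      qed
      then show "w \<in> Field omega_omega" using w by simp
    qed
  qed
  fix u v assume "u \<in> Field omega_omega" "v \<in> Field omega_omega"
  then have uv: "okl u" "okl v" by auto
  show "(u,v) \<in> omega_omega \<longleftrightarrow> (chi n u, chi n v) \<in> osum bool_ord (\<lambda>b. if b then lexprod (fin_ord 1) omega_omega else lexprod (fin_ord n) (omega_pow 1))"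
    using uv n by (cases "(n,u)" rule: chi.cases; cases "(n,v)" rule: chi.cases)
      (auto simp: okl_def Field_bool Field_lexprod rf_lexprod)
qed




lemma rf_L_summand[simp]: "rf (L_summand m i)"
  by (simp add: L_summand_def Let_def rf_lexprod)

lemma L_ord_Nord: "L_ord m = osum Nord (L_summand m)"
  by (simp add: L_ord_def Nord_def)

lemma rf_L_ord[simp]: "rf (L_ord m)"
  unfolding L_ord_Nord by (rule rf_osum) simp

lemma L_summand_0: "L_summand m 0 = lexprod (fin_ord 1) omega_omega"
  by (simp add: L_summand_def)

lemma L_summand_pos: "m \<ge> 0 \<Longrightarrow> i < 0 \<Longrightarrow> L_summand m i = lexprod (fin_ord (nat (-i))) (omega_pow (nat m + nat (-i)))"
  by (simp add: L_summand_def Let_def)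

lemma L_summand_neg: "m < 0 \<Longrightarrow> i < 0 \<Longrightarrow> L_summand m i = lexprod (fin_ord (nat (-m) + nat (-i))) (omega_pow (nat (-i)))"
  by (simp add: L_summand_def Let_def)

lemma L_summand_neg_shift: "m < 0 \<Longrightarrow> i \<le> 0 \<Longrightarrow>
   L_summand (m+1) (i-1) = lexprod (fin_ord (nat (-m) + nat (-i))) (omega_pow (Suc (nat (-i))))"
proof (cases "m + 1 \<ge> 0")
  case True
  assume "m < 0" "i \<le> 0"
  then have "m = -1" using True by simp
  moreover have "nat (1 - i) = Suc (nat (-i))" using \<open>i \<le> 0\<close> by simp
  ultimately show ?thesis using \<open>i \<le> 0\<close> by (simp add: L_summand_def Let_def)
next
  case False
  assume "m < 0" "i \<le> 0"
  then have e1: "nat (- (m + 1)) + nat (- (i - 1)) = nat (-m) + nat (-i)" and e2: "nat (- (i - 1)) = Suc (nat (-i))"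
    using False by auto
  have h: "L_summand (m+1) (i-1) = lexprod (fin_ord (nat (- (m + 1)) + nat (- (i - 1)))) (omega_pow (nat (- (i - 1))))"
    using L_summand_neg[of "m+1" "i-1"] False \<open>i \<le> 0\<close> by simp
  show ?thesis unfolding h unfolding e1 unfolding e2 by (rule refl)
qed

lemma step_block: "order_iso (lexprod (lexprod (fin_ord k) (omega_pow p)) omega_ord) (lexprod (fin_ord k) (omega_pow (Suc p)))"
  by (rule order_iso_trans[OF lexprod_assoc lexprod_cong_right])
     (auto intro: omega_pow_snoc simp: rf_lexprod)

lemma step_top: "order_iso (lexprod (lexprod (fin_ord 1) omega_omega) omega_ord) (lexprod omega_omega omega_ord)"
  by (rule order_iso_trans[OF lexprod_assoc lexprod_one]) (auto simp: rf_lexprod)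

lemma L_step: "order_iso (lexprod (L_ord m) omega_ord) (L_ord (m+1))"
proof -
  have 1: "order_iso (lexprod (L_ord m) omega_ord) (osum Nord (\<lambda>i. lexprod (L_summand m i) omega_ord))"
    unfolding L_ord_Nord by (rule lexprod_osum) auto
  have 2: "order_iso (osum Nord (\<lambda>i. lexprod (L_summand m i) omega_ord)) (osum Nord (L_summand (m+1)))"
  proof (cases "m \<ge> 0")
    case True
    show ?thesis
    proof (rule osum_cong[where g=id, simplified])
      show "\<forall>i\<in>Field Nord. order_iso (lexprod (L_summand m i) omega_ord) (L_summand (m + 1) i)"
      proof
        fix i assume "i \<in> Field Nord" then have i: "i \<le> 0" by (simp add: Field_Nord)
        show "order_iso (lexprod (L_summand m i) omega_ord) (L_summand (m + 1) i)"
        proof (cases "i = 0")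
          case True
          have "order_iso (lexprod (L_summand m 0) omega_ord) (L_summand (m + 1) 0)"
            unfolding L_summand_0
            by (rule order_iso_trans[OF step_top order_iso_trans[OF oo_times_omega order_iso_sym[OF lexprod_one]]]) simp
          then show ?thesis using True by simp
        next
          case False
          then have "i < 0" using i by simp
          moreover have "nat (m+1) + nat (-i) = Suc (nat m + nat (-i))" using True by simp
          ultimately show ?thesis using True by (simp add: L_summand_pos step_block)
        qed
      qed
    qed (auto simp: rf_lexprod)
  next
    case False
    then have m: "m < 0" by simp
    show ?thesis
    proof (rule merge)
      show "\<forall>i<0. order_iso (lexprod (L_summand m i) omega_ord) (L_summand (m + 1) (i - 1))"
        using m by (simp add: L_summand_neg L_summand_neg_shift step_block)
      have e: "(\<lambda>b. if b then L_summand (m + 1) 0 else L_summand (m + 1) (- 1)) =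
         (\<lambda>b. if b then lexprod (fin_ord 1) omega_omega else lexprod (fin_ord (nat (-m))) (omega_pow 1))"
      proof -
        have h1: "L_summand (m+1) (-1) = lexprod (fin_ord (nat (-m))) (omega_pow 1)"
        proof (cases "m = -1")
          case True then show ?thesis by (simp add: L_summand_def)
        next
          case False then have "m+1 < 0" "nat (-(m+1)) + 1 = nat(-m)" using m by auto
          then show ?thesis by (simp add: L_summand_def Let_def)
        qed
        show ?thesis by (rule ext) (simp add: h1 L_summand_0)
      qed
      have "nat (-m) \<ge> 1" using m by simp
      then have o: "order_iso omega_omega (osum bool_ord (\<lambda>b. if b then lexprod (fin_ord 1) omega_omega else lexprod (fin_ord (nat (-m))) (omega_pow 1)))"
        by (rule oo_split)
      have o2: "order_iso (lexprod (lexprod (fin_ord 1) omega_omega) omega_ord) (osum bool_ord (\<lambda>b. if b then lexprod (fin_ord 1) omega_omega else lexprod (fin_ord (nat (-m))) (omega_pow 1)))"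
        by (rule order_iso_trans[OF step_top order_iso_trans[OF oo_times_omega o]])
      show "order_iso (lexprod (L_summand m 0) omega_ord)
          (osum bool_ord (\<lambda>b. if b then L_summand (m + 1) 0 else L_summand (m + 1) (- 1)))"
        unfolding e unfolding L_summand_0 by (rule o2)
    qed (auto simp: rf_lexprod)
  qed
  show ?thesis using order_iso_trans[OF 1 2] by (simp add: L_ord_Nord)
qed

lemma Field_int_ord[simp]: "Field int_ord = UNIV" by (auto simp: Field_def int_ord_def)
lemma int_ord_mem[simp]: "(i,j) \<in> int_ord \<longleftrightarrow> i \<le> j" by (simp add: int_ord_def)

lemma sum_step:
  assumes g: "bij_betw g UNIV UNIV" "\<And>i j. i \<le> j \<longleftrightarrow> g i \<le> (g j :: int)"
    and r: "\<And>i. rf (M i)" "\<And>i. rf (M' i)"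
    and iso: "\<And>i. order_iso (lexprod (M i) omega_ord) (M' (g i))"
  shows "order_iso (lexprod (osum int_ord M) omega_ord) (osum int_ord M')"
proof (rule order_iso_trans[OF lexprod_osum])
  show "order_iso (osum int_ord (\<lambda>i. lexprod (M i) omega_ord)) (osum int_ord M')"
  proof -
    have m: "\<forall>i\<in>Field int_ord. \<forall>j\<in>Field int_ord. (i,j)\<in>int_ord \<longleftrightarrow> (g i, g j)\<in>int_ord"
      unfolding int_ord_mem using g(2) by blast
    show ?thesis by (rule osum_cong[where g=g, OF _ m]) (auto simp: g(1) iso r rf_lexprod)
  qed
qed (auto simp: r)

lemma bij_succ: "bij_betw (\<lambda>i::int. i + 1) UNIV UNIV"
  by (rule bij_betw_byWitness[where f'="\<lambda>i. i - 1"]) auto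

lemma even_step: "order_iso (lexprod I_even omega_ord) I_odd"
  unfolding I_even_def I_odd_def
  by (rule sum_step[where g=id]) (auto simp: L_step)

lemma odd_step: "order_iso (lexprod I_odd omega_ord) I_even"
  unfolding I_even_def I_odd_def
proof (rule sum_step[where g="\<lambda>i. i + 1"])
  fix i :: int
  have e: "L_ord (2 * (i + 1)) = L_ord (2 * i + 1 + 1)" by (rule arg_cong[where f=L_ord]) simp
  show "order_iso (lexprod (L_ord (2 * i + 1)) omega_ord) (L_ord (2 * (i + 1)))"
    unfolding e by (rule L_step)
qed (auto simp: bij_succ)

lemma all_step: "order_iso (lexprod I_all omega_ord) I_all"
  unfolding I_all_def
  by (rule sum_step[where g="\<lambda>i. i + 1"]) (auto simp: bij_succ L_step)

lemma sq_step: assumes "rf X" shows "order_iso (lexprod (lexprod X omega_ord) omega_ord) (lexprod X (omega_pow 2))"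
proof -
  have a: "order_iso (lexprod omega_ord omega_ord) (omega_pow 2)"
    using order_iso_trans[OF lexprod_cong_left[OF omega_pow_one] omega_pow_snoc[of 1]] by (simp add: numeral_2_eq_2)
  show ?thesis
    by (rule order_iso_trans[OF lexprod_assoc lexprod_cong_right[OF a]]) (auto simp: rf_lexprod)
qed

lemma rf_I: "rf I_even" "rf I_odd" "rf I_all"
  unfolding I_even_def I_odd_def I_all_def by (auto intro: rf_osum)

theorem mainTheorem6:
  shows "order_iso (lexprod I_even omega_ord) I_odd
       \<and> order_iso (lexprod I_odd omega_ord) I_even
       \<and> order_iso (lexprod I_all omega_ord) I_all
       \<and> order_iso (lexprod I_even (omega_pow 2)) I_even
       \<and> order_iso (lexprod I_odd (omega_pow 2)) I_odd"
proof (intro conjI even_step odd_step all_step)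
  show "order_iso (lexprod I_even (omega_pow 2)) I_even"
    using order_iso_trans[OF order_iso_sym[OF sq_step[OF rf_I(1)]]
        order_iso_trans[OF lexprod_cong_left[OF even_step] odd_step]] rf_I by simp
  show "order_iso (lexprod I_odd (omega_pow 2)) I_odd"
    using order_iso_trans[OF order_iso_sym[OF sq_step[OF rf_I(2)]]
        order_iso_trans[OF lexprod_cong_left[OF odd_step] even_step]] rf_I by simp
qed


end
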